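(* Let $\varphi:\mathbb{R}\to\mathbb{R}$ be a diffeomorphism with at most quadratic growth, and let $\Sigma$ be a properly immersed $[\varphi,\vec e_3]$-minimal surface in $\mathbb{R}^3$ such that $|\dot\varphi(\mu(p))|>\xi$ for all $p$ outside a compact subset of $\Sigma$, for some constant $\xi>0$. Then, for every vector $\vec v\in\mathbb{R}^3$ with $\langle \vec v,\vec e_3\rangle>0$, $\Sigma$ is not contained in the closed half-space $\mathcal{H}^{\varphi}_{\vec v}=\{x\in\mathbb{R}^3:\ \operatorname{sgn}(\dot\varphi)\langle x,\vec v\rangle\le 0\}$.
   Context: Surfaces are connected, orientable, immersed in $\mathbb{R}^3$, without boundary, with unit normal $N$; $\{\vec e_1,\vec e_2,\vec e_3\}$ is the standard basis. For a surface $\Sigma$, $\mu(p)=\langle p,\vec e_3\rangle$ is the height function and $\eta=\langle N,\vec e_3\rangle$ the angle function. Given a smooth $\varphi:\mathbb{R}\to\mathbb{R}$, $\Sigma$ is called $[\varphi,\vec e_3]$-minimal if its mean curvature vector $\vec H$ (trace of the second fundamental form, equal to the Laplacian of the position vector) satisfies $\vec H=\dot\varphi(\mu)\,\eta\,N$; equivalently, writing $\vec H=-HN$, $H=-\dot\varphi(\mu)\eta$ (these are the critical points of the weighted area $\int_\Sigma e^{\varphi(\mu)}\,d\Sigma$). Since $\varphi$ is a diffeomorphism, $\dot\varphi$ never vanishes and has a constant sign $\operatorname{sgn}(\dot\varphi)\in\{1,-1\}$. "At most quadratic growth" means there is $C>0$ with $|\dot\varphi(t)|\le C(1+|t|)$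 for all $t\in\mathbb{R}$. Proper means the immersion is a proper map. *)

theory Defs
  imports "HOL-Analysis.Analysis"
begin

primrec Ck_on :: "nat \<Rightarrow> 'a::euclidean_space set \<Rightarrow> ('a \<Rightarrow> 'b::real_normed_vector) \<Rightarrow> bool" where
  "Ck_on 0 U f = continuous_on U f"
| "Ck_on (Suc k) U f = (f differentiable_on U \<and>
      (\<forall>i\<in>Basis. Ck_on k U (\<lambda>x. frechet_derivative f (at x) i)))"

definition smooth_on :: "'a::euclidean_space set \<Rightarrow> ('a \<Rightarrow> 'b::real_normed_vector) \<Rightarrow> bool" where
  "smooth_on U f \<longleftrightarrow> open U \<and> (\<forall>k. Ck_on k U f)"

definition diffeomorphism_R :: "(real \<Rightarrow> real) \<Rightarrow> bool" where
  "diffeomorphism_R \<phi> \<longleftrightarrow> bij \<phi> \<and> smooth_on UNIV \<phi> \<and> smooth_on UNIV (inv \<phi>)"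

definition at_most_quadratic_growth :: "(real \<Rightarrow> real) \<Rightarrow> bool" where
  "at_most_quadratic_growth \<phi> \<longleftrightarrow> (\<exists>C>0. \<forall>t. \<bar>deriv \<phi> t\<bar> \<le> C * (1 + \<bar>t\<bar>))"

definition pd :: "(real^2 \<Rightarrow> real^3) \<Rightarrow> 2 \<Rightarrow> real^2 \<Rightarrow> real^3" where
  "pd Y i u = frechet_derivative Y (at u) (axis i 1)"

definition pd2 :: "(real^2 \<Rightarrow> real^3) \<Rightarrow> 2 \<Rightarrow> 2 \<Rightarrow> real^2 \<Rightarrow> real^3" where
  "pd2 Y i j u = frechet_derivative (pd Y i) (at u) (axis j 1)"

text \<open>Trace of the (scalar) second fundamental form w.r.t. the normal n, in local coordinates:
  (h11 g22 - 2 h12 g12 + h22 g11) / (g11 g22 - g12^2), so that the mean curvature vector is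
  this quantity times n.\<close>
definition mean_curv_trace :: "(real^2 \<Rightarrow> real^3) \<Rightarrow> real^3 \<Rightarrow> real^2 \<Rightarrow> real" where
  "mean_curv_trace Y n u =
     (let g11 = pd Y 1 u \<bullet> pd Y 1 u; g12 = pd Y 1 u \<bullet> pd Y 2 u; g22 = pd Y 2 u \<bullet> pd Y 2 u;
          h11 = pd2 Y 1 1 u \<bullet> n; h12 = pd2 Y 1 2 u \<bullet> n; h22 = pd2 Y 2 2 u \<bullet> n
      in (h11 * g22 - 2 * h12 * g12 + h22 * g11) / (g11 * g22 - g12 ^ 2))"

definition local_param :: "'m topology \<Rightarrow> ('m \<Rightarrow> real^3) \<Rightarrow> (real^2) set \<Rightarrow> (real^2 \<Rightarrow> 'm) \<Rightarrow> bool" where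
  "local_param M X U \<psi> \<longleftrightarrow> open U \<and> openin M (\<psi> ` U) \<and>
     homeomorphic_map (top_of_set U) (subtopology M (\<psi> ` U)) \<psi> \<and>
     smooth_on U (X \<circ> \<psi>) \<and>
     (\<forall>u\<in>U. inj (frechet_derivative (X \<circ> \<psi>) (at u)))"

definition oriented_immersed_surface :: "'m topology \<Rightarrow> ('m \<Rightarrow> real^3) \<Rightarrow> ('m \<Rightarrow> real^3) \<Rightarrow> bool" where
  "oriented_immersed_surface M X N \<longleftrightarrow>
     topspace M \<noteq> {} \<and> connected_space M \<and> Hausdorff_space M \<and> second_countable M \<and>
     (\<forall>p\<in>topspace M. \<exists>U \<psi>. local_param M X U \<psi> \<and> p \<in> \<psi> ` U) \<and>
     continuous_map M euclidean N \<and>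
     (\<forall>p\<in>topspace M. norm (N p) = 1) \<and>
     (\<forall>U \<psi>. local_param M X U \<psi> \<longrightarrow>
        (\<forall>u\<in>U. \<forall>i. pd (X \<circ> \<psi>) i u \<bullet> N (\<psi> u) = 0))"

definition height :: "real^3 \<Rightarrow> real" where
  "height x = x \<bullet> axis 3 1"

definition phi_minimal :: "(real \<Rightarrow> real) \<Rightarrow> 'm topology \<Rightarrow> ('m \<Rightarrow> real^3) \<Rightarrow> ('m \<Rightarrow> real^3) \<Rightarrow> bool" where
  "phi_minimal \<phi> M X N \<longleftrightarrow> oriented_immersed_surface M X N \<and>
     (\<forall>U \<psi>. local_param M X U \<psi> \<longrightarrow>
        (\<forall>u\<in>U. mean_curv_trace (X \<circ> \<psi>) (N (\<psi> u)) u
                 = deriv \<phi> (height (X (\<psi> u))) * (N (\<psi> u) \<bullet> axis 3 1)))"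

definition proper_immersion :: "'m topology \<Rightarrow> ('m \<Rightarrow> real^3) \<Rightarrow> bool" where
  "proper_immersion M X \<longleftrightarrow>
     (\<forall>K. compact K \<longrightarrow> compactin M {p \<in> topspace M. X p \<in> K})"

end

theory Submission
  imports Defs "HOL-Analysis.Cross3"
begin

lemma second_order_max:
  fixes h h' :: "real \<Rightarrow> real" and d c :: real
  assumes d: "d > 0"
    and hd: "\<And>t. \<bar>t\<bar> < d \<Longrightarrow> (h has_real_derivative h' t) (at t)"
    and hmax: "\<And>t. \<bar>t\<bar> < d \<Longrightarrow> h t \<le> h 0"
    and h'd: "(h' has_real_derivative c) (at 0)"
  shows "h' 0 = 0" and "c \<le> 0"
proof -
  show h0: "h' 0 = 0"
    using DERIV_local_max[OF hd[of 0] d] hmax d by (auto simp: dist_real_def abs_minus_commute)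
  show "c \<le> 0"
  proof (rule ccontr)
    assume "\<not> c \<le> 0"
    hence c: "c > 0" by simp
    have "((\<lambda>y. (h' y - h' 0) / (y - 0)) \<longlongrightarrow> c) (at 0)"
      using h'd unfolding DERIV_def by (simp add: h0)
    hence "((\<lambda>y. h' y / y) \<longlongrightarrow> c) (at_right 0)"
      using h0 by (simp add: filterlim_at_split)
    hence "eventually (\<lambda>y. h' y / y > c/2) (at_right 0)"
      using c by (intro order_tendstoD) auto
    then obtain e where e: "e > 0" and he: "\<And>y. 0 < y \<Longrightarrow> y < e \<Longrightarrow> h' y / y > c/2"
      by (auto simp: eventually_at_right_field)
    define t where "t = min e d / 2"
    have t: "0 < t" "t < e" "t < d" using e d by (auto simp: t_def)
    have "\<And>x. 0 \<le> x \<Longrightarrow> x \<le> t \<Longrightarrow> (h has_real_derivative h' x) (at x)"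
      using t by (intro hd) auto
    from MVT2[OF t(1) this] obtain z where z: "0 < z" "z < t" "h t - h 0 = (t - 0) * h' z"
      by blast
    have "h' z / z > c/2" using he[of z] z t by auto
    hence "h' z / z > 0" using c by linarith
    hence "h' z > 0" using z by (simp add: zero_less_divide_iff)
    hence "h t > h 0" using z t by (smt (verit) mult_pos_pos)
    moreover have "h t \<le> h 0" using hmax t by auto
    ultimately show False by simp
  qed
qed


lemma mixed_partials:
  fixes f Pa Pb Qab Qba :: "'a::real_normed_vector \<Rightarrow> real" and ea eb x :: 'a
  assumes U: "open U" and x: "x \<in> U"
    and A1: "\<And>u t. u + t *\<^sub>R ea \<in> U \<Longrightarrow> ((\<lambda>s. f (u + s *\<^sub>R ea)) has_real_derivative Pa (u + t *\<^sub>R ea)) (at t)"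
    and A2: "\<And>u t. u + t *\<^sub>R eb \<in> U \<Longrightarrow> ((\<lambda>s. f (u + s *\<^sub>R eb)) has_real_derivative Pb (u + t *\<^sub>R eb)) (at t)"
    and B12: "\<And>u t. u + t *\<^sub>R eb \<in> U \<Longrightarrow> ((\<lambda>s. Pa (u + s *\<^sub>R eb)) has_real_derivative Qab (u + t *\<^sub>R eb)) (at t)"
    and B21: "\<And>u t. u + t *\<^sub>R ea \<in> U \<Longrightarrow> ((\<lambda>s. Pb (u + s *\<^sub>R ea)) has_real_derivative Qba (u + t *\<^sub>R ea)) (at t)"
    and C12: "isCont Qab x" and C21: "isCont Qba x"
  shows "Qab x = Qba x"
proof (rule ccontr)
  assume ne: "Qab x \<noteq> Qba x"
  define d where "d = \<bar>Qab x - Qba x\<bar> / 2"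
  have d: "d > 0" using ne by (auto simp: d_def)
  obtain r where r: "r > 0" "ball x r \<subseteq> U" using U x open_contains_ball by blast
  obtain d1 where d1: "d1 > 0" "\<And>y. dist y x < d1 \<Longrightarrow> dist (Qab y) (Qab x) < d"
    using C12 d unfolding continuous_at_eps_delta by (metis dist_commute)
  obtain d2 where d2: "d2 > 0" "\<And>y. dist y x < d2 \<Longrightarrow> dist (Qba y) (Qba x) < d"
    using C21 d unfolding continuous_at_eps_delta by (metis dist_commute)
  define E where "E = norm ea + norm eb + 1"
  have E: "E > 0" "norm ea < E" "norm eb < E" unfolding E_def by (smt (verit) norm_ge_zero)+
  define h where "h = min r (min d1 d2) / (2 * E)"
  have h: "h > 0" using r d1 d2 E by (auto simp: h_def)
  have hE: "h * E < r" "h * E < d1" "h * E < d2"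
    using r d1 d2 E by (auto simp: h_def)
  have inU: "x + s *\<^sub>R ea + t *\<^sub>R eb \<in> U" and near: "norm (s *\<^sub>R ea + t *\<^sub>R eb) < h * E"
    if "0 \<le> s" "s \<le> h" "0 \<le> t" "t \<le> h" for s t
  proof -
    have "norm (s *\<^sub>R ea + t *\<^sub>R eb) \<le> s * norm ea + t * norm eb"
      using that by (metis abs_of_nonneg norm_scaleR norm_triangle_ineq)
    also have "\<dots> \<le> h * norm ea + h * norm eb"
      using that by (intro add_mono mult_right_mono) auto
    also have "\<dots> < h * E" using h by (simp add: E_def algebra_simps)
    finally show "norm (s *\<^sub>R ea + t *\<^sub>R eb) < h * E" .
    moreover have "dist x (x + s *\<^sub>R ea + t *\<^sub>R eb) = norm (s *\<^sub>R ea + t *\<^sub>R eb)"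
      proof -
      have "x - (x + s *\<^sub>R ea + t *\<^sub>R eb) = - (s *\<^sub>R ea + t *\<^sub>R eb)" by (simp add: algebra_simps)
      thus ?thesis by (simp only: dist_norm norm_minus_cancel)
    qed
    ultimately have "dist x (x + s *\<^sub>R ea + t *\<^sub>R eb) < r" using hE by linarith
    thus "x + s *\<^sub>R ea + t *\<^sub>R eb \<in> U" using r by auto
  qed
  define \<Delta> where "\<Delta> = f (x + h *\<^sub>R ea + h *\<^sub>R eb) - f (x + h *\<^sub>R eb) - f (x + h *\<^sub>R ea) + f x"
  have "\<exists>\<xi>. norm (\<xi> - x) < h * E \<and> \<Delta> = h * (h * Qab \<xi>)"
  proof -
    define g where "g s = f ((x + h *\<^sub>R eb) + s *\<^sub>R ea) - f (x + s *\<^sub>R ea)" for s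
    have "(g has_real_derivative (Pa ((x + h *\<^sub>R eb) + s *\<^sub>R ea) - Pa (x + s *\<^sub>R ea))) (at s)"
      if "0 \<le> s" "s \<le> h" for s
    proof -
      have a: "(x + h *\<^sub>R eb) + s *\<^sub>R ea \<in> U" using inU[OF that h[THEN less_imp_le] order_refl]
        by (simp add: algebra_simps)
      have b: "x + s *\<^sub>R ea \<in> U" using inU[OF that order_refl h[THEN less_imp_le]] by simp
      show ?thesis unfolding g_def by (intro DERIV_diff A1 a b)
    qed
    from MVT2[OF h this] obtain s1 where s1: "0 < s1" "s1 < h"
      "g h - g 0 = (h - 0) * (Pa ((x + h *\<^sub>R eb) + s1 *\<^sub>R ea) - Pa (x + s1 *\<^sub>R ea))" by blast
    have "((\<lambda>t. Pa ((x + s1 *\<^sub>R ea) + t *\<^sub>R eb)) has_real_derivative Qab ((x + s1 *\<^sub>R ea) + t *\<^sub>R eb)) (at t)"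
      if "0 \<le> t" "t \<le> h" for t
      using inU[of s1 t] s1 that by (intro B12) auto
    from MVT2[OF h this] obtain t1 where t1: "0 < t1" "t1 < h"
      "Pa ((x + s1 *\<^sub>R ea) + h *\<^sub>R eb) - Pa ((x + s1 *\<^sub>R ea) + 0 *\<^sub>R eb) = (h - 0) * Qab ((x + s1 *\<^sub>R ea) + t1 *\<^sub>R eb)"
      by blast
    have "\<Delta> = g h - g 0" by (simp add: \<Delta>_def g_def algebra_simps)
    also have "\<dots> = h * (h * Qab ((x + s1 *\<^sub>R ea) + t1 *\<^sub>R eb))"
      using s1(3) t1(3) by (simp add: algebra_simps)
    finally have "\<Delta> = h * (h * Qab (x + s1 *\<^sub>R ea + t1 *\<^sub>R eb))" .
    moreover have "norm ((x + s1 *\<^sub>R ea + t1 *\<^sub>R eb) - x) < h * E"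
      using near[of s1 t1] s1 t1 by (simp add: algebra_simps)
    ultimately show ?thesis by blast
  qed
  then obtain \<xi> where \<xi>: "norm (\<xi> - x) < h * E" "\<Delta> = h * (h * Qab \<xi>)" by blast
  have "\<exists>\<xi>. norm (\<xi> - x) < h * E \<and> \<Delta> = h * (h * Qba \<xi>)"
  proof -
    define g where "g t = f ((x + h *\<^sub>R ea) + t *\<^sub>R eb) - f (x + t *\<^sub>R eb)" for t
    have "(g has_real_derivative (Pb ((x + h *\<^sub>R ea) + t *\<^sub>R eb) - Pb (x + t *\<^sub>R eb))) (at t)"
      if "0 \<le> t" "t \<le> h" for t
    proof -
      have a: "(x + h *\<^sub>R ea) + t *\<^sub>R eb \<in> U" using inU[OF h[THEN less_imp_le] order_refl that]
        by (simp add: algebra_simps)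
      have b: "x + t *\<^sub>R eb \<in> U" using inU[OF order_refl h[THEN less_imp_le] that] by simp
      show ?thesis unfolding g_def by (intro DERIV_diff A2 a b)
    qed
    from MVT2[OF h this] obtain t1 where t1: "0 < t1" "t1 < h"
      "g h - g 0 = (h - 0) * (Pb ((x + h *\<^sub>R ea) + t1 *\<^sub>R eb) - Pb (x + t1 *\<^sub>R eb))" by blast
    have "((\<lambda>s. Pb ((x + t1 *\<^sub>R eb) + s *\<^sub>R ea)) has_real_derivative Qba ((x + t1 *\<^sub>R eb) + s *\<^sub>R ea)) (at s)"
      if "0 \<le> s" "s \<le> h" for s
      using inU[of s t1] t1 that by (intro B21) (auto simp: algebra_simps)
    from MVT2[OF h this] obtain s1 where s1: "0 < s1" "s1 < h"
      "Pb ((x + t1 *\<^sub>R eb) + h *\<^sub>R ea) - Pb ((x + t1 *\<^sub>R eb) + 0 *\<^sub>R ea) = (h - 0) * Qba ((x + t1 *\<^sub>R eb) + s1 *\<^sub>R ea)"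
      by blast
    have e: "(x + h *\<^sub>R ea) + t1 *\<^sub>R eb = (x + t1 *\<^sub>R eb) + h *\<^sub>R ea" by (simp add: algebra_simps)
    have "\<Delta> = g h - g 0" by (simp add: \<Delta>_def g_def algebra_simps)
    also have "\<dots> = h * (h * Qba ((x + t1 *\<^sub>R eb) + s1 *\<^sub>R ea))"
      using t1(3) s1(3) e by (simp add: algebra_simps)
    finally have "\<Delta> = h * (h * Qba (x + s1 *\<^sub>R ea + t1 *\<^sub>R eb))" by (simp add: algebra_simps)
    moreover have "norm ((x + s1 *\<^sub>R ea + t1 *\<^sub>R eb) - x) < h * E"
      using near[of s1 t1] s1 t1 by (simp add: algebra_simps)
    ultimately show ?thesis by blast
  qed
  then obtain \<xi>' where \<xi>': "norm (\<xi>' - x) < h * E" "\<Delta> = h * (h * Qba \<xi>')" by blast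
  have "Qab \<xi> = Qba \<xi>'" using \<xi>(2) \<xi>'(2) h by simp
  moreover have "\<bar>Qab \<xi> - Qab x\<bar> < d" using d1(2)[of \<xi>] \<xi>(1) hE by (simp add: dist_norm)
  moreover have "\<bar>Qba \<xi>' - Qba x\<bar> < d" using d2(2)[of \<xi>'] \<xi>'(1) hE by (simp add: dist_norm)
  ultimately show False unfolding d_def by (smt (verit) field_sum_of_halves)
qed


lemma cross_id1: "cross3 (cross3 (a::real^3) b) z = (a \<bullet> z) *\<^sub>R b - (b \<bullet> z) *\<^sub>R a"
  by (simp add: cross3_simps forall_3)

lemma cross_id2: "cross3 (p::real^3) (cross3 p z) = (p \<bullet> z) *\<^sub>R p - (p \<bullet> p) *\<^sub>R z"
  by (simp add: cross3_simps forall_3)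

lemma cross_id3: "cross3 (a::real^3) b \<bullet> cross3 a b = (a \<bullet> a) * (b \<bullet> b) - (a \<bullet> b)^2"
  by (simp add: cross3_simps power2_eq_square forall_3)

lemma parallel_normal:
  fixes a b n z :: "real^3"
  assumes "n \<bullet> a = 0" "n \<bullet> b = 0" "n \<bullet> n = 1" "z \<bullet> a = 0" "z \<bullet> b = 0"
    and "(a \<bullet> a) * (b \<bullet> b) - (a \<bullet> b)^2 > 0"
  shows "z = (z \<bullet> n) *\<^sub>R n"
proof -
  define p where "p = cross3 a b"
  have pp: "p \<bullet> p > 0" using assms(6) cross_id3 p_def by simp
  have "cross3 p z = 0" unfolding p_def cross_id1 using assms by (simp add: inner_commute)
  hence "(p \<bullet> p) *\<^sub>R z = (p \<bullet> z) *\<^sub>R p" using cross_id2[of p z] by simp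
  hence "inverse (p \<bullet> p) *\<^sub>R ((p \<bullet> p) *\<^sub>R z) = inverse (p \<bullet> p) *\<^sub>R ((p \<bullet> z) *\<^sub>R p)" by simp
  hence z: "z = ((p \<bullet> z) / (p \<bullet> p)) *\<^sub>R p" using pp by (simp add: divide_inverse_commute)
  have "cross3 p n = 0" unfolding p_def cross_id1 using assms by (simp add: inner_commute)
  hence "(p \<bullet> p) *\<^sub>R n = (p \<bullet> n) *\<^sub>R p" using cross_id2[of p n] by simp
  hence "inverse (p \<bullet> p) *\<^sub>R ((p \<bullet> p) *\<^sub>R n) = inverse (p \<bullet> p) *\<^sub>R ((p \<bullet> n) *\<^sub>R p)" by simp
  hence n: "n = ((p \<bullet> n) / (p \<bullet> p)) *\<^sub>R p" using pp by (simp add: divide_inverse_commute)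
  define \<alpha> where "\<alpha> = (p \<bullet> n) / (p \<bullet> p)"
  define \<beta> where "\<beta> = (p \<bullet> z) / (p \<bullet> p)"
  have n': "n = \<alpha> *\<^sub>R p" and z': "z = \<beta> *\<^sub>R p" using n z by (simp_all add: \<alpha>_def \<beta>_def)
  have 1: "\<alpha> * \<alpha> * (p \<bullet> p) = 1" using assms(3) n' by (simp add: algebra_simps)
  have "(z \<bullet> n) *\<^sub>R n = (\<beta> * \<alpha> * (p \<bullet> p) * \<alpha>) *\<^sub>R p" using n' z' by (simp add: algebra_simps)
  also have "\<beta> * \<alpha> * (p \<bullet> p) * \<alpha> = \<beta>" using 1 by (simp add: algebra_simps)
  finally show ?thesis using z' by simp
qed


lemma dir_deriv:
  assumes "(F has_derivative F') (at (u + t *\<^sub>R w))"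
  shows "((\<lambda>s. F (u + s *\<^sub>R w)) has_vector_derivative F' w) (at t)"
proof -
  have l: "((\<lambda>s. u + s *\<^sub>R w) has_derivative (\<lambda>s. s *\<^sub>R w)) (at t)"
    by (auto intro!: derivative_eq_intros)
  have "((F \<circ> (\<lambda>s. u + s *\<^sub>R w)) has_derivative (F' \<circ> (\<lambda>s. s *\<^sub>R w))) (at t)"
    by (rule diff_chain_at[OF l]) (simp add: assms)
  moreover have "F' \<circ> (\<lambda>s. s *\<^sub>R w) = (\<lambda>s. s *\<^sub>R F' w)"
    using has_derivative_linear[OF assms] by (auto simp: linear_scale)
  ultimately show ?thesis by (simp add: has_vector_derivative_def o_def)
qed

lemma lin2:
  assumes "linear L"
  shows "L (w::real^2) = w$1 *\<^sub>R L (axis 1 1) + w$2 *\<^sub>R L (axis 2 1)"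
proof -
  have "w = w$1 *\<^sub>R axis 1 1 + w$2 *\<^sub>R axis 2 1"
    by (simp add: vec_eq_iff forall_2 axis_def)
  hence "L w = L (w$1 *\<^sub>R axis 1 1 + w$2 *\<^sub>R axis 2 1)" by simp
  also have "\<dots> = w$1 *\<^sub>R L (axis 1 1) + w$2 *\<^sub>R L (axis 2 1)"
    using assms by (simp add: linear_add linear_scale)
  finally show ?thesis .
qed

lemma vd_inner:
  fixes f g :: "real \<Rightarrow> 'a::real_inner"
  assumes "(f has_vector_derivative f') (at t)" "(g has_vector_derivative g') (at t)"
  shows "((\<lambda>t. f t \<bullet> g t) has_real_derivative (f' \<bullet> g t + f t \<bullet> g')) (at t)"
proof -
  have "((\<lambda>t. f t \<bullet> g t) has_derivative (\<lambda>h. f t \<bullet> (h *\<^sub>R g') + (h *\<^sub>R f') \<bullet> g t)) (at t)"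
    using assms unfolding has_vector_derivative_def by (rule has_derivative_inner)
  moreover have "(\<lambda>h. f t \<bullet> (h *\<^sub>R g') + (h *\<^sub>R f') \<bullet> g t) = (*) (f' \<bullet> g t + f t \<bullet> g')"
    by (auto simp: algebra_simps)
  ultimately show ?thesis by (simp add: has_field_derivative_def)
qed


lemma cscale_vd:
  assumes "(g has_vector_derivative g') (at t)"
  shows "((\<lambda>t. (a::real) *\<^sub>R g t) has_vector_derivative a *\<^sub>R g') (at t)"
  using has_vector_derivative_scaleR[OF DERIV_const assms, of a] by simp

lemma line_test:
  fixes Y :: "real^2 \<Rightarrow> real^3" and w :: "real^2"
  assumes U: "open U" and u0: "u0 \<in> U"
    and dY: "\<And>u. u \<in> U \<Longrightarrow> (Y has_derivative frechet_derivative Y (at u)) (at u)"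
    and dP: "\<And>i u. u \<in> U \<Longrightarrow> (pd Y i has_derivative frechet_derivative (pd Y i) (at u)) (at u)"
    and mx: "\<And>u. u \<in> U \<Longrightarrow> s * (Y u \<bullet> v) - \<epsilon> * ln (1 + Y u \<bullet> Y u) \<le> s * (Y u0 \<bullet> v) - \<epsilon> * ln (1 + Y u0 \<bullet> Y u0)"
  defines "c0 \<equiv> Y u0"
    and "D0 \<equiv> w$1 *\<^sub>R pd Y 1 u0 + w$2 *\<^sub>R pd Y 2 u0"
    and "DD \<equiv> w$1 *\<^sub>R (w$1 *\<^sub>R pd2 Y 1 1 u0 + w$2 *\<^sub>R pd2 Y 1 2 u0) + w$2 *\<^sub>R (w$1 *\<^sub>R pd2 Y 2 1 u0 + w$2 *\<^sub>R pd2 Y 2 2 u0)"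
  shows "s * (D0 \<bullet> v) - \<epsilon> * ((D0 \<bullet> c0 + c0 \<bullet> D0) / (1 + c0 \<bullet> c0)) = 0"
    and "s * (DD \<bullet> v) - \<epsilon> * (((D0 \<bullet> D0 + c0 \<bullet> DD) + (DD \<bullet> c0 + D0 \<bullet> D0)) * (1 + c0 \<bullet> c0)
            - (D0 \<bullet> c0 + c0 \<bullet> D0) * (D0 \<bullet> c0 + c0 \<bullet> D0)) / ((1 + c0 \<bullet> c0) * (1 + c0 \<bullet> c0)) \<le> 0"
proof -
  obtain r where r: "r > 0" "ball u0 r \<subseteq> U" using U u0 open_contains_ball by blast
  define d where "d = r / (norm w + 1)"
  have nw: "norm w + 1 > 0" by (smt (verit) norm_ge_zero)
  have d: "d > 0" using r nw by (simp add: d_def)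
  have inU: "u0 + t *\<^sub>R w \<in> U" if "\<bar>t\<bar> < d" for t
  proof -
    have "norm (t *\<^sub>R w) = \<bar>t\<bar> * norm w" by simp
    also have "\<dots> \<le> d * norm w" using that by (intro mult_right_mono) auto
    also have "\<dots> < r" using r nw by (simp add: d_def field_simps)
    finally have "dist u0 (u0 + t *\<^sub>R w) < r" by (simp add: dist_norm)
    thus ?thesis using r by auto
  qed
  define c where "c t = Y (u0 + t *\<^sub>R w)" for t
  define D where "D t = w$1 *\<^sub>R pd Y 1 (u0 + t *\<^sub>R w) + w$2 *\<^sub>R pd Y 2 (u0 + t *\<^sub>R w)" for t
  have cD: "(c has_vector_derivative D t) (at t)" if "\<bar>t\<bar> < d" for t
  proof -
    have "(c has_vector_derivative frechet_derivative Y (at (u0 + t *\<^sub>R w)) w) (at t)"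
      unfolding c_def by (rule dir_deriv) (rule dY[OF inU[OF that]])
    moreover have "frechet_derivative Y (at (u0 + t *\<^sub>R w)) w = D t"
      unfolding D_def pd_def
      by (rule lin2) (rule has_derivative_linear[OF dY[OF inU[OF that]]])
    ultimately show ?thesis by simp
  qed
  have DDd: "(D has_vector_derivative DD) (at 0)"
  proof -
    have "((\<lambda>s. pd Y i (u0 + s *\<^sub>R w)) has_vector_derivative frechet_derivative (pd Y i) (at u0) w) (at 0)" for i
      by (rule dir_deriv) (simp add: dP[OF u0])
    moreover have "frechet_derivative (pd Y i) (at u0) w = w$1 *\<^sub>R pd2 Y i 1 u0 + w$2 *\<^sub>R pd2 Y i 2 u0" for i
      unfolding pd2_def by (rule lin2) (rule has_derivative_linear[OF dP[OF u0]])
    ultimately have "((\<lambda>s. pd Y i (u0 + s *\<^sub>R w)) has_vector_derivative (w$1 *\<^sub>R pd2 Y i 1 u0 + w$2 *\<^sub>R pd2 Y i 2 u0)) (at 0)" for i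
      by simp
    then show ?thesis unfolding D_def DD_def
      by (intro has_vector_derivative_add cscale_vd)
  qed
  define h where "h t = s * (c t \<bullet> v) - \<epsilon> * ln (1 + c t \<bullet> c t)" for t
  define h' where "h' t = s * (D t \<bullet> v) - \<epsilon> * ((D t \<bullet> c t + c t \<bullet> D t) / (1 + c t \<bullet> c t))" for t
  have pos: "1 + c t \<bullet> c t > 0" for t by (simp add: add_pos_nonneg)
  have hd: "(h has_real_derivative h' t) (at t)" if "\<bar>t\<bar> < d" for t
  proof -
    have A: "((\<lambda>t. c t \<bullet> v) has_real_derivative D t \<bullet> v + c t \<bullet> 0) (at t)"
      by (rule vd_inner[OF cD[OF that] has_vector_derivative_const])
    have B: "((\<lambda>t. 1 + c t \<bullet> c t) has_real_derivative 0 + (D t \<bullet> c t + c t \<bullet> D t)) (at t)"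
      by (intro DERIV_add DERIV_const vd_inner cD that)
    have L: "((\<lambda>t. ln (1 + c t \<bullet> c t)) has_real_derivative (1 / (1 + c t \<bullet> c t)) * (0 + (D t \<bullet> c t + c t \<bullet> D t))) (at t)"
      by (rule DERIV_chain2[OF DERIV_ln_divide[OF pos] B])
    have "(h has_real_derivative s * (D t \<bullet> v + c t \<bullet> 0) - \<epsilon> * ((1 / (1 + c t \<bullet> c t)) * (0 + (D t \<bullet> c t + c t \<bullet> D t)))) (at t)"
      unfolding h_def by (intro DERIV_diff DERIV_cmult A L)
    thus ?thesis by (rule DERIV_cong) (simp add: h'_def)
  qed
  have h'd: "(h' has_real_derivative s * (DD \<bullet> v + D 0 \<bullet> 0) - \<epsilon> * (((D 0 \<bullet> D 0 + c 0 \<bullet> DD) + (DD \<bullet> c 0 + D 0 \<bullet> D 0)) * (1 + c 0 \<bullet> c 0)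
            - (D 0 \<bullet> c 0 + c 0 \<bullet> D 0) * (0 + (D 0 \<bullet> c 0 + c 0 \<bullet> D 0))) / ((1 + c 0 \<bullet> c 0) * (1 + c 0 \<bullet> c 0))) (at 0)"
  proof -
    have z: "\<bar>0::real\<bar> < d" using d by simp
    have N: "((\<lambda>t. D t \<bullet> c t + c t \<bullet> D t) has_real_derivative (DD \<bullet> c 0 + D 0 \<bullet> D 0) + (D 0 \<bullet> D 0 + c 0 \<bullet> DD)) (at 0)"
      by (intro DERIV_add vd_inner DDd cD[OF z])
    have B: "((\<lambda>t. 1 + c t \<bullet> c t) has_real_derivative 0 + (D 0 \<bullet> c 0 + c 0 \<bullet> D 0)) (at 0)"
      by (intro DERIV_add DERIV_const vd_inner cD[OF z])
    have Q: "((\<lambda>t. (D t \<bullet> c t + c t \<bullet> D t) / (1 + c t \<bullet> c t)) has_real_derivative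
       (((DD \<bullet> c 0 + D 0 \<bullet> D 0) + (D 0 \<bullet> D 0 + c 0 \<bullet> DD)) * (1 + c 0 \<bullet> c 0) - (D 0 \<bullet> c 0 + c 0 \<bullet> D 0) * (0 + (D 0 \<bullet> c 0 + c 0 \<bullet> D 0))) / ((1 + c 0 \<bullet> c 0) * (1 + c 0 \<bullet> c 0))) (at 0)"
      using DERIV_divide[OF N B] pos[of 0] by simp
    have A: "((\<lambda>t. D t \<bullet> v) has_real_derivative DD \<bullet> v + D 0 \<bullet> 0) (at 0)"
      by (rule vd_inner[OF DDd has_vector_derivative_const])
    show ?thesis unfolding h'_def
      by (rule DERIV_cong[OF DERIV_diff[OF DERIV_cmult[OF A] DERIV_cmult[OF Q]]]) (simp add: algebra_simps)
  qed
  have hmax: "h t \<le> h 0" if "\<bar>t\<bar> < d" for t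
    using mx[OF inU[OF that]] by (simp add: h_def c_def)
  have c0: "c 0 = c0" and D0: "D 0 = D0" by (simp_all add: c_def c0_def D_def D0_def)
  from second_order_max[OF d hd hmax h'd]
  show "s * (D0 \<bullet> v) - \<epsilon> * ((D0 \<bullet> c0 + c0 \<bullet> D0) / (1 + c0 \<bullet> c0)) = 0"
    and "s * (DD \<bullet> v) - \<epsilon> * (((D0 \<bullet> D0 + c0 \<bullet> DD) + (DD \<bullet> c0 + D0 \<bullet> D0)) * (1 + c0 \<bullet> c0)
            - (D0 \<bullet> c0 + c0 \<bullet> D0) * (D0 \<bullet> c0 + c0 \<bullet> D0)) / ((1 + c0 \<bullet> c0) * (1 + c0 \<bullet> c0)) \<le> 0"
    by (simp_all add: h'_def c0 D0)
qed


lemma vd_inner_const: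
  assumes "(f has_vector_derivative f') (at t)"
  shows "((\<lambda>t. f t \<bullet> (n::'a::real_inner)) has_real_derivative f' \<bullet> n) (at t)"
  using vd_inner[OF assms has_vector_derivative_const[of n]] by simp

lemma axis_comps: "(axis 1 1 :: real^2) $ 1 = 1" "(axis 1 1 :: real^2) $ 2 = 0"
  "(axis 2 1 :: real^2) $ 1 = 0" "(axis 2 1 :: real^2) $ 2 = 1"
  by (simp_all add: axis_def)

lemma smooth_facts:
  fixes Y :: "real^2 \<Rightarrow> real^3"
  assumes sm: "smooth_on U Y"
  shows "open U"
    and "\<And>u. u \<in> U \<Longrightarrow> (Y has_derivative frechet_derivative Y (at u)) (at u)"
    and "\<And>i u. u \<in> U \<Longrightarrow> (pd Y i has_derivative frechet_derivative (pd Y i) (at u)) (at u)"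
    and "\<And>i j. continuous_on U (pd2 Y i j)"
proof -
  show U: "open U" using sm by (simp add: smooth_on_def)
  have C: "Ck_on (Suc (Suc (Suc 0))) U Y" using sm by (simp add: smooth_on_def)
  have pdeq: "pd Y i = (\<lambda>x. frechet_derivative Y (at x) (axis i 1))" for i
    by (simp add: fun_eq_iff pd_def)
  have pd2eq: "pd2 Y i j = (\<lambda>x. frechet_derivative (pd Y i) (at x) (axis j 1))" for i j
    by (simp add: fun_eq_iff pd2_def)
  have Yd: "Y differentiable_on U" using C by simp
  have C2: "Ck_on (Suc (Suc 0)) U (pd Y i)" for i
    using C unfolding pdeq by simp
  have Pd: "pd Y i differentiable_on U" for i using C2[of i] by simp
  have C1: "Ck_on (Suc 0) U (pd2 Y i j)" for i j
    using C2[of i] unfolding pd2eq by simp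
  show "(Y has_derivative frechet_derivative Y (at u)) (at u)" if "u \<in> U" for u
    using Yd that U by (simp add: differentiable_on_eq_differentiable_at frechet_derivative_works[symmetric])
  show "(pd Y i has_derivative frechet_derivative (pd Y i) (at u)) (at u)" if "u \<in> U" for i u
    using Pd[of i] that U by (simp add: differentiable_on_eq_differentiable_at frechet_derivative_works[symmetric])
  show "continuous_on U (pd2 Y i j)" for i j
    using C1[of i j] by (simp add: differentiable_imp_continuous_on)
qed


lemma key_local:
  fixes Y :: "real^2 \<Rightarrow> real^3" and N0 v :: "real^3"
  assumes sm: "smooth_on U Y" and u0: "u0 \<in> U"
    and inj: "inj (frechet_derivative Y (at u0))"
    and N0: "N0 \<bullet> N0 = 1" and perp: "\<And>i. pd Y i u0 \<bullet> N0 = 0"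
    and mc: "mean_curv_trace Y N0 u0 = k * (N0 \<bullet> axis 3 1)"
    and eps: "\<epsilon> > 0"
    and mx: "\<And>u. u \<in> U \<Longrightarrow> s * (Y u \<bullet> v) - \<epsilon> * ln (1 + Y u \<bullet> Y u) \<le> s * (Y u0 \<bullet> v) - \<epsilon> * ln (1 + Y u0 \<bullet> Y u0)"
  shows "k * (s * (v \<bullet> axis 3 1) - 2 * \<epsilon> * (Y u0 \<bullet> axis 3 1) / (1 + Y u0 \<bullet> Y u0)) \<le> 4 * \<epsilon>"
proof -
  note sf = smooth_facts[OF sm]
  note U = sf(1) and dY = sf(2) and dP = sf(3) and cP = sf(4)
  define c0 where "c0 = Y u0"
  define R where "R = 1 + c0 \<bullet> c0"
  have R: "R \<ge> 1" by (simp add: R_def)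
  define z where "z = s *\<^sub>R v - (2 * \<epsilon> / R) *\<^sub>R c0"
  define Y1 where "Y1 = pd Y 1 u0"
  define Y2 where "Y2 = pd Y 2 u0"
  define g11 where "g11 = Y1 \<bullet> Y1"
  define g12 where "g12 = Y1 \<bullet> Y2"
  define g22 where "g22 = Y2 \<bullet> Y2"
  define h11 where "h11 = pd2 Y 1 1 u0 \<bullet> N0"
  define h12 where "h12 = pd2 Y 1 2 u0 \<bullet> N0"
  define h21 where "h21 = pd2 Y 2 1 u0 \<bullet> N0"
  define h22 where "h22 = pd2 Y 2 2 u0 \<bullet> N0"
  note LT = line_test[OF U u0 dY dP mx]
  have zY: "z \<bullet> pd Y i u0 = 0" if "i = 1 \<or> i = 2" for i
  proof -
    have "s * (pd Y i u0 \<bullet> v) - \<epsilon> * ((pd Y i u0 \<bullet> c0 + c0 \<bullet> pd Y i u0) / R) = 0"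
      using LT(1)[of "axis i 1"] that by (auto simp: axis_comps c0_def R_def)
    thus ?thesis unfolding z_def by (simp add: inner_commute algebra_simps)
  qed
  define L where "L = frechet_derivative Y (at u0)"
  have linL: "linear L" unfolding L_def using has_derivative_linear[OF dY[OF u0]] .
  have L0: "L x = 0 \<Longrightarrow> x = 0" for x
    using inj linL unfolding L_def[symmetric] by (metis injD linear_0)
  have Y1L: "Y1 = L (axis 1 1)" and Y2L: "Y2 = L (axis 2 1)" by (simp_all add: Y1_def Y2_def L_def pd_def)
  have "Y2 \<noteq> 0" using L0[of "axis 2 1"] Y2L by (auto simp: axis_eq_0_iff)
  hence g22: "g22 > 0" by (simp add: g22_def)
  define V where "V = g22 *\<^sub>R Y1 - g12 *\<^sub>R Y2"
  have "V = L (g22 *\<^sub>R axis 1 1 - g12 *\<^sub>R axis 2 1)"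
    using linL by (simp add: V_def Y1L Y2L linear_diff linear_scale)
  moreover have "g22 *\<^sub>R axis 1 1 - g12 *\<^sub>R axis 2 1 \<noteq> (0::real^2)"
  proof
    assume "g22 *\<^sub>R axis 1 1 - g12 *\<^sub>R axis 2 1 = (0::real^2)"
    hence "(g22 *\<^sub>R axis 1 1 - g12 *\<^sub>R axis 2 1 :: real^2) $ 1 = 0" by simp
    thus False using g22 by (simp add: axis_comps)
  qed
  ultimately have "V \<noteq> 0" using L0 by metis
  hence "V \<bullet> V > 0" by simp
  moreover have "V \<bullet> V = g22 * (g11 * g22 - g12^2)"
    by (simp add: V_def g11_def g12_def g22_def inner_diff_left inner_diff_right inner_commute power2_eq_square algebra_simps)
  ultimately have det: "g11 * g22 - g12^2 > 0" using g22 by (simp add: zero_less_mult_iff)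
  have zN: "z = (z \<bullet> N0) *\<^sub>R N0"
    by (rule parallel_normal[of N0 Y1 Y2 z])
       (use perp zY det N0 in \<open>auto simp: Y1_def Y2_def g11_def g12_def g22_def inner_commute\<close>)
  define lam where "lam = z \<bullet> N0"
  have h12: "h21 = h12"
  proof -
    have "(\<lambda>u. pd2 Y 1 2 u \<bullet> N0) u0 = (\<lambda>u. pd2 Y 2 1 u \<bullet> N0) u0"
    proof (rule mixed_partials[OF U u0, where f="\<lambda>u. Y u \<bullet> N0" and Pa="\<lambda>u. pd Y 1 u \<bullet> N0"
          and Pb="\<lambda>u. pd Y 2 u \<bullet> N0" and ea="axis 1 1" and eb="axis 2 1"])
      show "((\<lambda>s. Y (u + s *\<^sub>R axis 1 1) \<bullet> N0) has_real_derivative pd Y 1 (u + t *\<^sub>R axis 1 1) \<bullet> N0) (at t)"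
        if "u + t *\<^sub>R axis 1 1 \<in> U" for u t
        using vd_inner_const[OF dir_deriv[OF dY[OF that]]] by (simp add: pd_def)
      show "((\<lambda>s. Y (u + s *\<^sub>R axis 2 1) \<bullet> N0) has_real_derivative pd Y 2 (u + t *\<^sub>R axis 2 1) \<bullet> N0) (at t)"
        if "u + t *\<^sub>R axis 2 1 \<in> U" for u t
        using vd_inner_const[OF dir_deriv[OF dY[OF that]]] by (simp add: pd_def)
      show "((\<lambda>s. pd Y 1 (u + s *\<^sub>R axis 2 1) \<bullet> N0) has_real_derivative pd2 Y 1 2 (u + t *\<^sub>R axis 2 1) \<bullet> N0) (at t)"
        if "u + t *\<^sub>R axis 2 1 \<in> U" for u t
        using vd_inner_const[OF dir_deriv[OF dP[OF that]]] by (simp add: pd2_def)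
      show "((\<lambda>s. pd Y 2 (u + s *\<^sub>R axis 1 1) \<bullet> N0) has_real_derivative pd2 Y 2 1 (u + t *\<^sub>R axis 1 1) \<bullet> N0) (at t)"
        if "u + t *\<^sub>R axis 1 1 \<in> U" for u t
        using vd_inner_const[OF dir_deriv[OF dP[OF that]]] by (simp add: pd2_def)
      show "isCont (\<lambda>u. pd2 Y 1 2 u \<bullet> N0) u0" "isCont (\<lambda>u. pd2 Y 2 1 u \<bullet> N0) u0"
        using cP U u0 by (auto simp: continuous_on_eq_continuous_at intro!: continuous_intros)
    qed
    thus ?thesis by (simp add: h12_def h21_def)
  qed
  have QW: "lam * (w$1*w$1*h11 + w$1*w$2*(h12+h21) + w$2*w$2*h22)
      \<le> 2*\<epsilon>*(w$1*w$1*g11 + 2*w$1*w$2*g12 + w$2*w$2*g22)" for w :: "real^2"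
  proof -
    define D0 where "D0 = w$1 *\<^sub>R pd Y 1 u0 + w$2 *\<^sub>R pd Y 2 u0"
    define DD where "DD = w$1 *\<^sub>R (w$1 *\<^sub>R pd2 Y 1 1 u0 + w$2 *\<^sub>R pd2 Y 1 2 u0) + w$2 *\<^sub>R (w$1 *\<^sub>R pd2 Y 2 1 u0 + w$2 *\<^sub>R pd2 Y 2 2 u0)"
    have H: "s * (DD \<bullet> v) - \<epsilon> * (((D0 \<bullet> D0 + c0 \<bullet> DD) + (DD \<bullet> c0 + D0 \<bullet> D0)) * R
            - (D0 \<bullet> c0 + c0 \<bullet> D0) * (D0 \<bullet> c0 + c0 \<bullet> D0)) / (R * R) \<le> 0"
      using LT(2)[of w] by (simp add: D0_def DD_def c0_def R_def)
    define A where "A = D0 \<bullet> D0"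
    define B where "B = c0 \<bullet> DD"
    define Cc where "Cc = c0 \<bullet> D0"
    have "s * (DD \<bullet> v) - \<epsilon> * ((A + B + (B + A)) * R - (Cc + Cc) * (Cc + Cc)) / (R * R) \<le> 0"
      using H by (simp add: A_def B_def Cc_def inner_commute)
    moreover have "\<epsilon> * ((A + B + (B + A)) * R - (Cc + Cc) * (Cc + Cc)) / (R * R)
        = 2 * \<epsilon> * A / R + 2 * \<epsilon> * B / R - 4 * \<epsilon> * Cc^2 / R^2"
      using R by (simp add: field_simps power2_eq_square)
    ultimately have 1: "s * (DD \<bullet> v) - 2 * \<epsilon> * B / R \<le> 2 * \<epsilon> * A / R - 4 * \<epsilon> * Cc^2 / R^2" by linarith
    have "4 * \<epsilon> * Cc^2 / R^2 \<ge> 0" using eps by simp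
    moreover have "2 * \<epsilon> * A / R \<le> 2 * \<epsilon> * A"
    proof -
      have "A \<ge> 0" by (simp add: A_def)
      hence "A / R \<le> A" using R by (simp add: divide_le_eq mult_le_cancel_left1)
      thus ?thesis using eps by (simp add: mult_left_mono times_divide_eq_right[symmetric] del: times_divide_eq_right)
    qed
    moreover have "z \<bullet> DD = s * (DD \<bullet> v) - 2 * \<epsilon> * B / R"
      by (simp add: z_def B_def inner_diff_left inner_diff_right inner_commute)
    ultimately have 2: "z \<bullet> DD \<le> 2 * \<epsilon> * A"
      using 1 by linarith
    have "z \<bullet> DD = lam * (N0 \<bullet> DD)" by (subst zN) (simp add: lam_def)
    also have "N0 \<bullet> DD = w$1*w$1*h11 + w$1*w$2*(h12+h21) + w$2*w$2*h22"
      by (simp add: DD_def h11_def h12_def h21_def h22_def inner_add_right inner_commute algebra_simps)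
    finally have 3: "z \<bullet> DD = lam * (w$1*w$1*h11 + w$1*w$2*(h12+h21) + w$2*w$2*h22)" .
    have 4: "A = w$1*w$1*g11 + 2*w$1*w$2*g12 + w$2*w$2*g22"
      by (simp add: A_def D0_def g11_def g12_def g22_def Y1_def Y2_def inner_add_left inner_add_right inner_commute algebra_simps)
    show ?thesis using 2 3 4 by simp
  qed
  have Qa: "lam * (g22*g22*h11 - 2*g22*g12*h12 + g12*g12*h22) \<le> 2*\<epsilon>*(g22*g22*g11 - 2*g22*g12*g12 + g12*g12*g22)"
    using QW[of "vector [g22, -g12]"] h12 by (simp add: algebra_simps)
  have Qb: "lam * h22 \<le> 2*\<epsilon>*g22"
    using QW[of "axis 2 1"] by (simp add: axis_comps)
  define det where "det = g11 * g22 - g12^2"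
  have det0: "det > 0" using det by (simp add: det_def)
  have "lam * h22 * det \<le> 2*\<epsilon>*g22 * det" using Qb det0 by (simp add: mult_right_mono)
  hence "lam * (g22*h11 - 2*g12*h12 + g11*h22) * g22 \<le> (4 * \<epsilon> * det) * g22"
    using Qa unfolding det_def by (simp add: algebra_simps power2_eq_square)
  hence 5: "lam * (g22*h11 - 2*g12*h12 + g11*h22) \<le> 4 * \<epsilon> * det"
    using g22 by simp
  have mct: "mean_curv_trace Y N0 u0 = (h11*g22 - 2*h12*g12 + h22*g11) / det"
    by (simp add: mean_curv_trace_def Let_def h11_def h12_def h22_def g11_def g12_def g22_def Y1_def Y2_def det_def)
  have "lam * mean_curv_trace Y N0 u0 \<le> 4 * \<epsilon>"
    using 5 det0 unfolding mct by (simp add: field_simps)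
  hence 6: "k * (lam * (N0 \<bullet> axis 3 1)) \<le> 4 * \<epsilon>" using mc by (simp add: algebra_simps)
  have "z \<bullet> axis 3 1 = ((z \<bullet> N0) *\<^sub>R N0) \<bullet> axis 3 1"
    by (rule arg_cong[where f="\<lambda>x. x \<bullet> axis 3 1"]) (rule zN)
  hence "lam * (N0 \<bullet> axis 3 1) = z \<bullet> axis 3 1" by (simp add: lam_def)
  also have "\<dots> = s * (v \<bullet> axis 3 1) - 2 * \<epsilon> * (Y u0 \<bullet> axis 3 1) / (1 + Y u0 \<bullet> Y u0)"
    by (simp add: z_def R_def c0_def inner_diff_left)
  finally show ?thesis using 6 by simp
qed


lemma phi_facts:
  fixes \<phi> :: "real \<Rightarrow> real"
  assumes "diffeomorphism_R \<phi>"
  shows "continuous_on UNIV (deriv \<phi>)" and "\<And>x. deriv \<phi> x \<noteq> 0"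
proof -
  have bij: "bij \<phi>" and s1: "smooth_on UNIV \<phi>" and s2: "smooth_on UNIV (inv \<phi>)"
    using assms by (auto simp: diffeomorphism_R_def)
  have C: "Ck_on (Suc (Suc 0)) UNIV \<phi>" using s1 by (simp add: smooth_on_def)
  have dphi: "\<phi> differentiable at x" for x
    using C by (simp add: differentiable_on_eq_differentiable_at)
  have fd: "frechet_derivative \<phi> (at x) 1 = deriv \<phi> x" for x
  proof -
    have "(\<phi> has_derivative frechet_derivative \<phi> (at x)) (at x)"
      using dphi frechet_derivative_works by blast
    moreover have "(\<phi> has_derivative (*) (deriv \<phi> x)) (at x)"
      using dphi DERIV_deriv_iff_real_differentiable has_field_derivative_def by blast
    ultimately have "frechet_derivative \<phi> (at x) = (*) (deriv \<phi> x)"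
      by (rule has_derivative_unique)
    thus ?thesis by simp
  qed
  have "Ck_on (Suc 0) UNIV (\<lambda>x. frechet_derivative \<phi> (at x) 1)" using C by simp
  hence "(\<lambda>x. frechet_derivative \<phi> (at x) 1) differentiable_on UNIV" by simp
  hence "continuous_on UNIV (\<lambda>x. frechet_derivative \<phi> (at x) 1)"
    by (rule differentiable_imp_continuous_on)
  thus "continuous_on UNIV (deriv \<phi>)" by (simp add: fd)
  show "deriv \<phi> x \<noteq> 0" for x
  proof -
    have C2: "Ck_on (Suc 0) UNIV (inv \<phi>)" using s2 by (simp add: smooth_on_def)
    have di: "inv \<phi> differentiable at y" for y
      using C2 by (simp add: differentiable_on_eq_differentiable_at)
    have ix: "inv \<phi> (\<phi> x) = x" using bij by (simp add: bij_is_inj)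
    have "DERIV \<phi> (inv \<phi> (\<phi> x)) :> deriv \<phi> x"
      using dphi[of x] ix DERIV_deriv_iff_real_differentiable by simp
    moreover have "DERIV (inv \<phi>) (\<phi> x) :> deriv (inv \<phi>) (\<phi> x)"
      using di DERIV_deriv_iff_real_differentiable by blast
    ultimately have "DERIV (\<lambda>y. \<phi> (inv \<phi> y)) (\<phi> x) :> deriv \<phi> x * deriv (inv \<phi>) (\<phi> x)"
      by (rule DERIV_chain2)
    moreover have "(\<lambda>y. \<phi> (inv \<phi> y)) = (\<lambda>y. y)"
      using bij by (simp add: fun_eq_iff bij_is_surj surj_f_inv_f)
    ultimately have "DERIV (\<lambda>y. y) (\<phi> x) :> deriv \<phi> x * deriv (inv \<phi>) (\<phi> x)" by simp
    hence "deriv \<phi> x * deriv (inv \<phi>) (\<phi> x) = 1" using DERIV_ident DERIV_unique by blast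
    thus ?thesis by auto
  qed
qed

lemma sign_const:
  fixes f :: "real \<Rightarrow> real"
  assumes "continuous_on UNIV f" "\<And>x. f x \<noteq> 0"
  shows "sgn (f 0) * f t = \<bar>f t\<bar>"
proof -
  have conn: "connected (range f)" using assms(1) connected_continuous_image connected_UNIV by blast
  have "0 \<notin> range f" using assms(2) by auto
  hence "\<not> (f t < 0 \<and> 0 < f 0)" "\<not> (f 0 < 0 \<and> 0 < f t)"
    using conn unfolding connected_iff_interval
    by (metis UNIV_I image_eqI less_imp_le)+
  thus ?thesis using assms(2)[of 0] assms(2)[of t]
    by (cases "f 0 > 0"; cases "f t > 0") (auto simp: sgn_if)
qed

lemma X_continuous:
  assumes "oriented_immersed_surface M X N"
  shows "continuous_map M euclidean X"
proof -
  have loc: "\<forall>p\<in>topspace M. \<exists>U \<psi>. local_param M X U \<psi> \<and> p \<in> \<psi> ` U"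
    using assms by (simp add: oriented_immersed_surface_def)
  have "openin M {p \<in> topspace M. X p \<in> W}" if W: "open W" for W
  proof (subst openin_subopen, intro ballI)
    fix p assume p: "p \<in> {p \<in> topspace M. X p \<in> W}"
    then obtain U \<psi> where lp: "local_param M X U \<psi>" and pU: "p \<in> \<psi> ` U" using loc by auto
    have op: "openin M (\<psi> ` U)" and hm: "homeomorphic_map (top_of_set U) (subtopology M (\<psi> ` U)) \<psi>"
      and sm: "smooth_on U (X \<circ> \<psi>)" using lp by (auto simp: local_param_def)
    have sub: "\<psi> ` U \<subseteq> topspace M" using op openin_subset by blast
    obtain g where g: "homeomorphic_maps (top_of_set U) (subtopology M (\<psi> ` U)) \<psi> g"
      using hm homeomorphic_map_maps by blast
    have gc: "continuous_map (subtopology M (\<psi> ` U)) (top_of_set U) g"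
      and gi: "\<And>y. y \<in> topspace (subtopology M (\<psi> ` U)) \<Longrightarrow> \<psi> (g y) = y"
      using g by (auto simp: homeomorphic_maps_def)
    have "Ck_on 0 U (X \<circ> \<psi>)" using sm unfolding smooth_on_def by blast
    hence "continuous_on U (X \<circ> \<psi>)" by simp
    hence "continuous_map (top_of_set U) euclidean (X \<circ> \<psi>)" by simp
    hence "continuous_map (subtopology M (\<psi> ` U)) euclidean ((X \<circ> \<psi>) \<circ> g)"
      using gc continuous_map_compose by blast
    hence cX: "continuous_map (subtopology M (\<psi> ` U)) euclidean X"
      by (rule continuous_map_eq) (simp add: gi)
    define T where "T = {q \<in> topspace (subtopology M (\<psi> ` U)). X q \<in> W}"
    have "openin (subtopology M (\<psi> ` U)) T"
      using cX W unfolding T_def continuous_map_def by auto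
    hence "openin M T" using op openin_trans_full by blast
    moreover have "p \<in> T" using p pU sub by (auto simp: T_def)
    moreover have "T \<subseteq> {p \<in> topspace M. X p \<in> W}" by (auto simp: T_def)
    ultimately show "\<exists>T. openin M T \<and> p \<in> T \<and> T \<subseteq> {p \<in> topspace M. X p \<in> W}" by blast
  qed
  thus ?thesis by (auto simp: continuous_map_def)
qed


theorem theoremA:
  fixes \<phi> :: "real \<Rightarrow> real" and M :: "'m topology" and X N :: "'m \<Rightarrow> real^3" and \<xi> :: real
  assumes "diffeomorphism_R \<phi>"
    and "at_most_quadratic_growth \<phi>"
    and "phi_minimal \<phi> M X N"
    and "proper_immersion M X"
    and "\<xi> > 0"
    and "\<exists>K. compactin M K \<and> (\<forall>p \<in> topspace M - K. \<bar>deriv \<phi> (height (X p))\<bar> > \<xi>)"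
  shows "\<forall>v::real^3. v \<bullet> axis 3 1 > 0 \<longrightarrow>
           \<not> (X ` topspace M \<subseteq> {x. sgn (deriv \<phi> 0) * (x \<bullet> v) \<le> 0})"
proof (intro allI impI notI)
  fix v :: "real^3"
  assume v3: "v \<bullet> axis 3 1 > 0" and cont: "X ` topspace M \<subseteq> {x. sgn (deriv \<phi> 0) * (x \<bullet> v) \<le> 0}"
  note pf = phi_facts[OF assms(1)]
  define s where "s = sgn (deriv \<phi> 0)"
  have sk: "s * deriv \<phi> t = \<bar>deriv \<phi> t\<bar>" for t
    unfolding s_def by (rule sign_const[OF pf])
  obtain C where C: "C > 0" "\<And>t. \<bar>deriv \<phi> t\<bar> \<le> C * (1 + \<bar>t\<bar>)"
    using assms(2) by (auto simp: at_most_quadratic_growth_def)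
  have ois: "oriented_immersed_surface M X N" using assms(3) by (simp add: phi_minimal_def)
  have Xc: "continuous_map M euclidean X" by (rule X_continuous[OF ois])
  obtain K where K: "compactin M K" "\<And>p. p \<in> topspace M - K \<Longrightarrow> \<bar>deriv \<phi> (height (X p))\<bar> > \<xi>"
    using assms(6) by blast
  obtain m where m: "m > 0" "\<And>p. p \<in> topspace M \<Longrightarrow> \<bar>deriv \<phi> (height (X p))\<bar> \<ge> m"
  proof -
    have "compact (X ` K)" using image_compactin[OF K(1) Xc] by simp
    then obtain B0 where B0: "\<And>x. x \<in> X ` K \<Longrightarrow> norm x \<le> B0"
      using compact_imp_bounded bounded_iff by metis
    define B where "B = max B0 0"
    have hb: "\<bar>height (X p)\<bar> \<le> B" if "p \<in> K" for p
    proof -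
      have "\<bar>height (X p)\<bar> \<le> norm (X p) * norm (axis 3 1 :: real^3)"
        unfolding height_def by (rule Cauchy_Schwarz_ineq2)
      also have "\<dots> = norm (X p)" by simp
      also have "\<dots> \<le> B" using B0[of "X p"] that by (auto simp: B_def)
      finally show ?thesis .
    qed
    have "compact ((\<lambda>t. \<bar>deriv \<phi> t\<bar>) ` {-B..B})"
      using pf(1) by (intro compact_continuous_image continuous_intros) (auto intro: continuous_on_subset)
    moreover have "(\<lambda>t. \<bar>deriv \<phi> t\<bar>) ` {-B..B} \<noteq> {}" by (auto simp: B_def)
    ultimately obtain m1 where m1: "m1 \<in> (\<lambda>t. \<bar>deriv \<phi> t\<bar>) ` {-B..B}"
      "\<And>y. y \<in> (\<lambda>t. \<bar>deriv \<phi> t\<bar>) ` {-B..B} \<Longrightarrow> m1 \<le> y"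
      using compact_attains_inf by metis
    have m1p: "m1 > 0" using m1(1) pf(2) by auto
    show ?thesis
    proof (rule that[of "min \<xi> m1"])
      show "min \<xi> m1 > 0" using m1p assms(5) by simp
      fix p assume p: "p \<in> topspace M"
      show "min \<xi> m1 \<le> \<bar>deriv \<phi> (height (X p))\<bar>"
      proof (cases "p \<in> K")
        case True
        hence "height (X p) \<in> {-B..B}" using hb[OF True] by auto
        hence "m1 \<le> \<bar>deriv \<phi> (height (X p))\<bar>" using m1(2) by blast
        thus ?thesis by simp
      next
        case False
        thus ?thesis using K(2)[of p] p by fastforce
      qed
    qed
  qed
  define \<epsilon> where "\<epsilon> = m * (v \<bullet> axis 3 1) / (2 * (4 + 3 * C))"
  have eps: "\<epsilon> > 0" using m v3 C by (simp add: \<epsilon>_def)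
  define G where "G x = s * (x \<bullet> v) - \<epsilon> * ln (1 + x \<bullet> x)" for x :: "real^3"
  have posr: "1 + x \<bullet> x > 0" for x :: "real^3" by (simp add: add_pos_nonneg)
  have Gc: "continuous_on UNIV G"
    unfolding G_def using posr by (intro continuous_intros) (auto simp: less_imp_neq[symmetric])
  have Fc: "continuous_map M euclidean (\<lambda>p. G (X p))"
    using continuous_map_compose[OF Xc, of euclidean G] Gc by (simp add: o_def)
  have Gle: "G (X p) \<le> - \<epsilon> * ln (1 + X p \<bullet> X p)" if "p \<in> topspace M" for p
    using cont that by (auto simp: G_def s_def)
  have "topspace M \<noteq> {}" using ois unfolding oriented_immersed_surface_def by blast
  then obtain p0 where p0: "p0 \<in> topspace M" by blast
  define c0 where "c0 = G (X p0)"
  define Rr where "Rr = sqrt (exp (- c0 / \<epsilon>))"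
  define T where "T = {p \<in> topspace M. X p \<in> cball 0 Rr}"
  have inT: "p \<in> T" if "p \<in> topspace M" "G (X p) \<ge> c0" for p
  proof -
    have "c0 \<le> - \<epsilon> * ln (1 + X p \<bullet> X p)" using Gle[OF that(1)] that(2) by linarith
    hence "ln (1 + X p \<bullet> X p) \<le> - c0 / \<epsilon>" using eps by (simp add: field_simps)
    hence "1 + X p \<bullet> X p \<le> exp (- c0 / \<epsilon>)" using posr by (metis exp_le_cancel_iff exp_ln)
    hence "norm (X p) ^ 2 \<le> exp (- c0 / \<epsilon>)" by (simp add: power2_norm_eq_inner)
    hence "norm (X p) \<le> Rr" unfolding Rr_def by (rule real_le_rsqrt)
    thus ?thesis using that by (simp add: T_def)
  qed
  have Tc: "compactin M T" using assms(4) compact_cball[of 0 Rr] unfolding proper_immersion_def T_def by blast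
  have "compact ((\<lambda>p. G (X p)) ` T)" using image_compactin[OF Tc Fc] by simp
  moreover have "(\<lambda>p. G (X p)) ` T \<noteq> {}" using inT[OF p0] by (auto simp: c0_def)
  ultimately obtain Fm where Fm: "Fm \<in> (\<lambda>p. G (X p)) ` T" "\<And>y. y \<in> (\<lambda>p. G (X p)) ` T \<Longrightarrow> y \<le> Fm"
    using compact_attains_sup by metis
  then obtain p where pT: "p \<in> T" and Fmp: "Fm = G (X p)" by blast
  have ptop: "p \<in> topspace M" using pT by (simp add: T_def)
  have pmax: "G (X q) \<le> G (X p)" if "q \<in> topspace M" for q
  proof (cases "q \<in> T")
    case True thus ?thesis using Fm(2) Fmp by auto
  next
    case False
    hence "G (X q) < c0" using inT[OF that] by force
    moreover have "c0 \<le> G (X p)" using Fm(2)[of c0] inT[OF p0] Fmp by (auto simp: c0_def)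
    ultimately show ?thesis by simp
  qed
  obtain U \<psi> where lp: "local_param M X U \<psi>" and pU: "p \<in> \<psi> ` U"
    using ois ptop by (auto simp: oriented_immersed_surface_def)
  then obtain u0 where u0: "u0 \<in> U" and pu: "p = \<psi> u0" by blast
  have sm: "smooth_on U (X \<circ> \<psi>)" and inj: "inj (frechet_derivative (X \<circ> \<psi>) (at u0))"
    and op: "openin M (\<psi> ` U)" using lp u0 by (auto simp: local_param_def)
  have sub: "\<psi> ` U \<subseteq> topspace M" using op openin_subset by blast
  have N1: "N (\<psi> u0) \<bullet> N (\<psi> u0) = 1"
    using ois sub u0 by (auto simp: oriented_immersed_surface_def power2_norm_eq_inner[symmetric])
  have perp: "pd (X \<circ> \<psi>) i u0 \<bullet> N (\<psi> u0) = 0" for i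
    using ois lp u0 by (auto simp: oriented_immersed_surface_def)
  define k where "k = deriv \<phi> (height (X (\<psi> u0)))"
  have mc: "mean_curv_trace (X \<circ> \<psi>) (N (\<psi> u0)) u0 = k * (N (\<psi> u0) \<bullet> axis 3 1)"
    using assms(3) lp u0 by (auto simp: phi_minimal_def k_def)
  have mx: "s * ((X \<circ> \<psi>) u \<bullet> v) - \<epsilon> * ln (1 + (X \<circ> \<psi>) u \<bullet> (X \<circ> \<psi>) u)
      \<le> s * ((X \<circ> \<psi>) u0 \<bullet> v) - \<epsilon> * ln (1 + (X \<circ> \<psi>) u0 \<bullet> (X \<circ> \<psi>) u0)" if "u \<in> U" for u
    using pmax[of "\<psi> u"] sub that pu by (auto simp: G_def)
  have key: "k * (s * (v \<bullet> axis 3 1) - 2 * \<epsilon> * ((X \<circ> \<psi>) u0 \<bullet> axis 3 1) / (1 + (X \<circ> \<psi>) u0 \<bullet> (X \<circ> \<psi>) u0)) \<le> 4 * \<epsilon>"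
    by (rule key_local[OF sm u0 inj N1 perp mc eps mx])
  define \<mu> where "\<mu> = X (\<psi> u0) \<bullet> axis 3 1"
  define r where "r = X (\<psi> u0) \<bullet> X (\<psi> u0)"
  have key': "k * s * (v \<bullet> axis 3 1) \<le> 4 * \<epsilon> + 2 * \<epsilon> * (k * \<mu>) / (1 + r)"
    using key by (simp add: \<mu>_def r_def algebra_simps)
  have ks: "k * s = \<bar>k\<bar>" using sk[of "height (X (\<psi> u0))"] by (simp add: k_def mult.commute)
  have km: "\<bar>k\<bar> \<ge> m" using m(2)[of "\<psi> u0"] sub u0 by (auto simp: k_def)
  have r0: "r \<ge> 0" by (simp add: r_def)
  have mu2: "\<mu>^2 \<le> r"
    using Cauchy_Schwarz_ineq[of "X (\<psi> u0)" "axis 3 1"] by (simp add: \<mu>_def r_def)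
  have kmu: "k * \<mu> \<le> C * (1 + \<bar>\<mu>\<bar>) * \<bar>\<mu>\<bar>"
  proof -
    have "k * \<mu> \<le> \<bar>k\<bar> * \<bar>\<mu>\<bar>" by (simp add: abs_mult[symmetric])
    also have "\<dots> \<le> C * (1 + \<bar>\<mu>\<bar>) * \<bar>\<mu>\<bar>"
      using C(2)[of \<mu>] by (intro mult_right_mono) (auto simp: k_def \<mu>_def height_def)
    finally show ?thesis .
  qed
  have sq: "\<bar>\<mu>\<bar> * \<bar>\<mu>\<bar> = \<mu>^2" by (simp add: power2_eq_square abs_mult_self)
  have "(\<bar>\<mu>\<bar> - 1) * (\<bar>\<mu>\<bar> - 1) \<ge> 0" by simp
  hence h1: "2 * \<bar>\<mu>\<bar> \<le> 1 + \<mu>^2" using sq by (simp add: algebra_simps)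
  have e1: "(1 + \<bar>\<mu>\<bar>) * \<bar>\<mu>\<bar> = \<bar>\<mu>\<bar> + \<mu>^2" using sq by (simp add: algebra_simps)
  have e2: "\<bar>\<mu>\<bar> + \<mu>^2 \<le> 3/2 * (1 + r)" using h1 mu2 by (simp add: algebra_simps)
  have h2: "(1 + \<bar>\<mu>\<bar>) * \<bar>\<mu>\<bar> \<le> 3/2 * (1 + r)" using e1 e2 by simp
  have "C * ((1 + \<bar>\<mu>\<bar>) * \<bar>\<mu>\<bar>) \<le> C * (3/2 * (1 + r))"
    using h2 C(1) by (intro mult_left_mono) auto
  hence "k * \<mu> \<le> C * (3/2 * (1 + r))" using kmu by (simp add: mult.assoc)
  hence h3: "k * \<mu> / (1 + r) \<le> 3/2 * C" using r0 by (simp add: divide_le_eq algebra_simps)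
  have "2 * \<epsilon> * (k * \<mu>) / (1 + r) = 2 * \<epsilon> * (k * \<mu> / (1 + r))" by simp
  also have "\<dots> \<le> 2 * \<epsilon> * (3/2 * C)" using h3 eps by (intro mult_left_mono) auto
  finally have "2 * \<epsilon> * (k * \<mu>) / (1 + r) \<le> 3 * C * \<epsilon>" by simp
  hence "\<bar>k\<bar> * (v \<bullet> axis 3 1) \<le> (4 + 3 * C) * \<epsilon>" using key' ks by (simp add: algebra_simps)
  moreover have "m * (v \<bullet> axis 3 1) \<le> \<bar>k\<bar> * (v \<bullet> axis 3 1)" using km v3 by (simp add: mult_right_mono)
  moreover have "(4 + 3 * C) * \<epsilon> = m * (v \<bullet> axis 3 1) / 2" using C by (simp add: \<epsilon>_def field_simps)
  moreover have "m * (v \<bullet> axis 3 1) > 0" using m v3 by simp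
  ultimately show False by linarith
qed


end
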